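(* Every free monoid is sofic.
   Context: For a non-empty finite set $X$, $\mathrm{Map}(X)$ is the monoid of all maps $X\to X$ under composition (identity $\mathrm{Id}_X$) with the Hamming metric $d_X(f,g)=|\{x\in X : f(x)\ne g(x)\}|/|X|$. For a monoid $M$ with identity $1_M$, finite $K\subset M$ and $\varepsilon,\alpha>0$, a map $\varphi\colon M\to\mathrm{Map}(X)$ is a $(K,\varepsilon)$-morphism if $d_X(\varphi(k_1k_2),\varphi(k_1)\varphi(k_2))\le\varepsilon$ for all $k_1,k_2\in K$ and $d_X(\varphi(1_M),\mathrm{Id}_X)\le\varepsilon$; it is $(K,\alpha)$-injective if $d_X(\varphi(k_1),\varphi(k_2))\ge\alpha$ for all distinct $k_1,k_2\in K$. $M$ is sofic if for every finite $K\subset M$ and every $\varepsilon>0$ there exist a non-empty finite set $X$ and a $(K,1-\varepsilon)$-injective $(K,\varepsilon)$-morphism $\varphi\colon M\to\mathrm{Map}(X)$. *)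

theory Defs
  imports Complex_Main
begin

definition hamming :: "'x set \<Rightarrow> ('x \<Rightarrow> 'x) \<Rightarrow> ('x \<Rightarrow> 'x) \<Rightarrow> real" where
  "hamming X f g = real (card {x\<in>X. f x \<noteq> g x}) / real (card X)"

text \<open>Finite sets X are taken as finite nonempty subsets of nat (every finite set is in
  bijection with one). A map X \<rightarrow> X is a function nat \<Rightarrow> nat mapping X into X,
  compared only on X.\<close>
definition sofic :: "'m set \<Rightarrow> ('m \<Rightarrow> 'm \<Rightarrow> 'm) \<Rightarrow> 'm \<Rightarrow> bool" where
  "sofic M mult one \<longleftrightarrow>
    (\<forall>K (\<epsilon>::real). finite K \<and> K \<subseteq> M \<and> \<epsilon> > 0 \<longrightarrow>
      (\<exists>(X::nat set) (\<phi>::'m \<Rightarrow> nat \<Rightarrow> nat).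
         finite X \<and> X \<noteq> {} \<and>
         (\<forall>m\<in>M. \<phi> m ` X \<subseteq> X) \<and>
         (\<forall>k1\<in>K. \<forall>k2\<in>K. hamming X (\<phi> (mult k1 k2)) (\<phi> k1 \<circ> \<phi> k2) \<le> \<epsilon>) \<and>
         hamming X (\<phi> one) id \<le> \<epsilon> \<and>
         (\<forall>k1\<in>K. \<forall>k2\<in>K. k1 \<noteq> k2 \<longrightarrow> hamming X (\<phi> k1) (\<phi> k2) \<ge> 1 - \<epsilon>)))"

definition free_monoid :: "'a set \<Rightarrow> 'a list set" where
  "free_monoid A = {xs. set xs \<subseteq> A}"

end

theory Submission
  imports Defs
begin

lemma hamming_zero: "\<forall>x\<in>X. f x = g x \<Longrightarrow> hamming X f g = 0"
proof -
  assume "\<forall>x\<in>X. f x = g x"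
  then have "{x\<in>X. f x \<noteq> g x} = {}" by auto
  then have "card {x\<in>X. f x \<noteq> g x} = 0" by (simp only: card.empty)
  then show ?thesis unfolding hamming_def by simp
qed

lemma hamming_one: "finite X \<Longrightarrow> X \<noteq> {} \<Longrightarrow> \<forall>x\<in>X. f x \<noteq> g x \<Longrightarrow> hamming X f g = 1"
proof -
  assume a: "finite X" "X \<noteq> {}" "\<forall>x\<in>X. f x \<noteq> g x"
  then have "{x\<in>X. f x \<noteq> g x} = X" by auto
  moreover have "card X > 0" using a by (simp add: card_gt_0_iff)
  ultimately show ?thesis unfolding hamming_def by simp
qed

lemma transfer:
  fixes S :: "'s set" and \<psi> :: "'m \<Rightarrow> 's \<Rightarrow> 's" and \<epsilon> :: real
  assumes S: "finite S" "S \<noteq> {}"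
    and cl: "\<forall>m\<in>M. \<psi> m ` S \<subseteq> S"
    and hom: "\<forall>k1\<in>K. \<forall>k2\<in>K. \<forall>s\<in>S. \<psi> (mult k1 k2) s = \<psi> k1 (\<psi> k2 s)"
    and one: "\<forall>s\<in>S. \<psi> one s = s"
    and inj: "\<forall>k1\<in>K. \<forall>k2\<in>K. k1 \<noteq> k2 \<longrightarrow> (\<forall>s\<in>S. \<psi> k1 s \<noteq> \<psi> k2 s)"
    and KM: "K \<subseteq> M" and one_in: "one \<in> M" and multM: "\<forall>k1\<in>K. \<forall>k2\<in>K. mult k1 k2 \<in> M"
    and eps: "\<epsilon> > 0"
  shows "\<exists>(X::nat set) (\<phi>::'m \<Rightarrow> nat \<Rightarrow> nat).
         finite X \<and> X \<noteq> {} \<and>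
         (\<forall>m\<in>M. \<phi> m ` X \<subseteq> X) \<and>
         (\<forall>k1\<in>K. \<forall>k2\<in>K. hamming X (\<phi> (mult k1 k2)) (\<phi> k1 \<circ> \<phi> k2) \<le> \<epsilon>) \<and>
         hamming X (\<phi> one) id \<le> \<epsilon> \<and>
         (\<forall>k1\<in>K. \<forall>k2\<in>K. k1 \<noteq> k2 \<longrightarrow> hamming X (\<phi> k1) (\<phi> k2) \<ge> 1 - \<epsilon>)"
proof -
  obtain h where h: "bij_betw h {0..<card S} S" using ex_bij_betw_nat_finite S(1) by blast
  define X where "X = {0..<card S}"
  define \<phi> where "\<phi> m i = inv_into X h (\<psi> m (h i))" for m i
  have hX: "\<And>i. i \<in> X \<Longrightarrow> h i \<in> S" using h X_def bij_betwE by blast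
  have injh: "inj_on h X" using h X_def bij_betw_imp_inj_on by blast
  have surjh: "h ` X = S" using h X_def bij_betw_imp_surj_on by blast
  have invX: "\<And>y. y \<in> S \<Longrightarrow> inv_into X h y \<in> X" using surjh inv_into_into by metis
  have hinv: "\<And>y. y \<in> S \<Longrightarrow> h (inv_into X h y) = y" using surjh f_inv_into_f by metis
  have invinj: "\<And>y z. y \<in> S \<Longrightarrow> z \<in> S \<Longrightarrow> inv_into X h y = inv_into X h z \<Longrightarrow> y = z"
    using hinv by metis
  have fX: "finite X" "X \<noteq> {}" using S X_def by auto
  have c1: "\<forall>m\<in>M. \<phi> m ` X \<subseteq> X"
    using cl hX invX unfolding \<phi>_def by blast
  have c2: "\<forall>k1\<in>K. \<forall>k2\<in>K. hamming X (\<phi> (mult k1 k2)) (\<phi> k1 \<circ> \<phi> k2) \<le> \<epsilon>"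
  proof (intro ballI)
    fix k1 k2 assume k: "k1 \<in> K" "k2 \<in> K"
    have "\<forall>x\<in>X. \<phi> (mult k1 k2) x = (\<phi> k1 \<circ> \<phi> k2) x"
    proof
      fix x assume x: "x \<in> X"
      have "\<psi> k2 (h x) \<in> S" using cl KM k hX x by blast
      then show "\<phi> (mult k1 k2) x = (\<phi> k1 \<circ> \<phi> k2) x"
        unfolding \<phi>_def using hinv hom k hX x by simp
    qed
    then have "hamming X (\<phi> (mult k1 k2)) (\<phi> k1 \<circ> \<phi> k2) = 0" by (rule hamming_zero)
    then show "hamming X (\<phi> (mult k1 k2)) (\<phi> k1 \<circ> \<phi> k2) \<le> \<epsilon>"
      using eps by simp
  qed
  have c3: "hamming X (\<phi> one) id \<le> \<epsilon>"
  proof -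
    have "\<forall>x\<in>X. \<phi> one x = id x" unfolding \<phi>_def using one hX injh inv_into_f_f by fastforce
    then have "hamming X (\<phi> one) id = 0" by (rule hamming_zero)
    then show ?thesis using eps by simp
  qed
  have c4: "\<forall>k1\<in>K. \<forall>k2\<in>K. k1 \<noteq> k2 \<longrightarrow> hamming X (\<phi> k1) (\<phi> k2) \<ge> 1 - \<epsilon>"
  proof (intro ballI impI)
    fix k1 k2 assume k: "k1 \<in> K" "k2 \<in> K" "k1 \<noteq> k2"
    have "\<forall>x\<in>X. \<phi> k1 x \<noteq> \<phi> k2 x"
    proof
      fix x assume x: "x \<in> X"
      have "\<psi> k1 (h x) \<in> S" "\<psi> k2 (h x) \<in> S" using cl KM k hX x by blast+
      moreover have "\<psi> k1 (h x) \<noteq> \<psi> k2 (h x)" using inj k hX x by blast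
      ultimately show "\<phi> k1 x \<noteq> \<phi> k2 x" unfolding \<phi>_def using invinj by blast
    qed
    then show "hamming X (\<phi> k1) (\<phi> k2) \<ge> 1 - \<epsilon>" using hamming_one[OF fX] eps by simp
  qed
  show ?thesis using fX c1 c2 c3 c4 by blast
qed

lemma take_take_app: "N \<ge> n \<Longrightarrow> take n (a @ take N y) = take n (a @ y)"
  by (simp add: take_append)

theorem corollary4p4:
  fixes A :: "'a set"
  shows "sofic (free_monoid A) (@) []"
  unfolding sofic_def
proof (intro allI impI)
  fix K :: "'a list set" and \<epsilon> :: real
  assume a: "finite K \<and> K \<subseteq> free_monoid A \<and> \<epsilon> > 0"
  define B where "B = \<Union>(set ` K)"
  define N where "N = Max (insert 0 (length ` K))"
  define n where "n = Suc N"
  define S where "S = {(c, x). c < n \<and> length x \<le> N \<and> set x \<subseteq> B}"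
  define \<psi> where "\<psi> w = (\<lambda>(c, x). ((c + length w) mod n, take N (filter (\<lambda>a. a \<in> B) w @ x)))"
    for w :: "'a list"
  have finB: "finite B" using a B_def by auto
  have lenK: "\<And>k. k \<in> K \<Longrightarrow> length k \<le> N" using a N_def by simp
  have setK: "\<And>k. k \<in> K \<Longrightarrow> set k \<subseteq> B" using B_def by auto
  have finS: "finite S"
  proof -
    have "S \<subseteq> {0..<n} \<times> {x. set x \<subseteq> B \<and> length x \<le> N}" unfolding S_def by auto
    moreover have "finite {x. set x \<subseteq> B \<and> length x \<le> N}"
      using finite_lists_length_le[OF finB] by simp
    ultimately show ?thesis using finite_subset by blast
  qed
  have "(0, []) \<in> S" unfolding S_def n_def by auto
  then have neS: "S \<noteq> {}" by blast
  have cl: "\<forall>m\<in>free_monoid A. \<psi> m ` S \<subseteq> S"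
    unfolding S_def \<psi>_def n_def by (force dest: in_set_takeD)
  have hom: "\<forall>k1\<in>K. \<forall>k2\<in>K. \<forall>s\<in>S. \<psi> (k1 @ k2) s = \<psi> k1 (\<psi> k2 s)"
  proof (intro ballI)
    fix k1 k2 s assume "k1 \<in> K" "k2 \<in> K" "s \<in> S"
    obtain c x where s: "s = (c, x)" by fastforce
    have "(c + (length k1 + length k2)) mod n = ((c + length k2) mod n + length k1) mod n"
      by (simp add: mod_add_right_eq add.commute add.left_commute)
    then show "\<psi> (k1 @ k2) s = \<psi> k1 (\<psi> k2 s)"
      unfolding \<psi>_def s using take_take_app[of N N "filter (\<lambda>a. a \<in> B) k1" "filter (\<lambda>a. a \<in> B) k2 @ x"]
      by (simp del: take_append)
  qed
  have one: "\<forall>s\<in>S. \<psi> [] s = s" unfolding \<psi>_def S_def by auto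
  have inj: "\<forall>k1\<in>K. \<forall>k2\<in>K. k1 \<noteq> k2 \<longrightarrow> (\<forall>s\<in>S. \<psi> k1 s \<noteq> \<psi> k2 s)"
  proof (intro ballI impI)
    fix k1 k2 s assume k: "k1 \<in> K" "k2 \<in> K" "k1 \<noteq> k2" and sS: "s \<in> S"
    obtain c x where s: "s = (c, x)" by fastforce
    have f1: "filter (\<lambda>a. a \<in> B) k1 = k1" using setK[OF k(1)] by (simp add: subset_code(1))
    have f2: "filter (\<lambda>a. a \<in> B) k2 = k2" using setK[OF k(2)] by (simp add: subset_code(1))
    have l1: "length k1 < n" "length k2 < n" using lenK k n_def by (auto simp: less_Suc_eq_le)
    show "\<psi> k1 s \<noteq> \<psi> k2 s"
    proof (cases "length k1 = length k2")
      case True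
      have t1: "take (length k1) (take N (k1 @ x)) = k1" using lenK[OF k(1)] by (simp add: min_def)
      have t2: "take (length k1) (take N (k2 @ x)) = k2" using lenK[OF k(2)] True by (simp add: min_def)
      show ?thesis
      proof
        assume "\<psi> k1 s = \<psi> k2 s"
        then have "take N (k1 @ x) = take N (k2 @ x)" unfolding \<psi>_def s using f1 f2 by simp
        then have "take (length k1) (take N (k1 @ x)) = take (length k1) (take N (k2 @ x))" by simp
        then show False using t1 t2 k(3) by simp
      qed
    next
      case False
      have "(c + length k1) mod n \<noteq> (c + length k2) mod n"
      proof
        assume "(c + length k1) mod n = (c + length k2) mod n"
        then have "length k1 mod n = length k2 mod n"
          by (simp add: nat_mod_eq_iff)
        then show False using l1 False by simp
      qed
      then show ?thesis unfolding \<psi>_def s by auto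
    qed
  qed
  show "\<exists>(X::nat set) (\<phi>::'a list \<Rightarrow> nat \<Rightarrow> nat).
         finite X \<and> X \<noteq> {} \<and>
         (\<forall>m\<in>free_monoid A. \<phi> m ` X \<subseteq> X) \<and>
         (\<forall>k1\<in>K. \<forall>k2\<in>K. hamming X (\<phi> (k1 @ k2)) (\<phi> k1 \<circ> \<phi> k2) \<le> \<epsilon>) \<and>
         hamming X (\<phi> []) id \<le> \<epsilon> \<and>
         (\<forall>k1\<in>K. \<forall>k2\<in>K. k1 \<noteq> k2 \<longrightarrow> hamming X (\<phi> k1) (\<phi> k2) \<ge> 1 - \<epsilon>)"
    apply (rule transfer[OF finS neS cl hom one inj])
    using a unfolding free_monoid_def by auto
qed

end
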